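(* The truncated Fourier–Plancherel operator $\mathscr{F}_{\mathbb{R}^{+}}$ on $L^2(\mathbb{R}^{+})$ is not similar to any normal operator, i.e. there is no bounded invertible operator $S$ and normal operator $\mathcal{N}$ (on a Hilbert space) with $\mathscr{F}_{\mathbb{R}^{+}}=S^{-1}\mathcal{N}S$.
   Context: $\mathbb{R}^{+}=(0,\infty)$. The truncated Fourier–Plancherel operator is $\mathscr{F}_{\mathbb{R}^{+}}=P_{\mathbb{R}^{+}}\mathscr{F}|_{L^2(\mathbb{R}^{+})}$, where $\mathscr{F}$ is the unitary Fourier–Plancherel operator on $L^2(\mathbb{R})$, $(\mathscr{F}x)(t)=\frac{1}{\sqrt{2\pi}}\int_{\mathbb{R}}x(\xi)e^{it\xi}d\xi$, and $P_{\mathbb{R}^{+}}$ is multiplication by the indicator of $\mathbb{R}^{+}$; for integrable $x$, $(\mathscr{F}_{\mathbb{R}^{+}}x)(t)=\frac{1}{\sqrt{2\pi}}\int_{\mathbb{R}^{+}}x(\xi)e^{it\xi}d\xi$, $t>0$. *)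

theory Defs
  imports "HOL-Analysis.Analysis"
begin

text \<open>Elements of L^2(0,oo) are represented by Borel functions real => complex that are
square integrable over {0<..}; two representatives are identified when they agree almost
everywhere on {0<..}. Values on (-oo,0] are irrelevant.\<close>

definition L2p :: "(real \<Rightarrow> complex) set" where
  "L2p = {f. f \<in> borel_measurable lborel \<and>
              set_integrable lborel {0<..} (\<lambda>x. (cmod (f x))\<^sup>2)}"

definition aeq :: "(real \<Rightarrow> complex) \<Rightarrow> (real \<Rightarrow> complex) \<Rightarrow> bool" where
  "aeq f g \<longleftrightarrow> (AE x in lborel. 0 < x \<longrightarrow> f x = g x)"

definition L2norm :: "(real \<Rightarrow> complex) \<Rightarrow> real" where
  "L2norm f = sqrt (LINT x:{0<..}|lborel. (cmod (f x))\<^sup>2)"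

definition bdd_op_L2 :: "((real \<Rightarrow> complex) \<Rightarrow> (real \<Rightarrow> complex)) \<Rightarrow> bool" where
  "bdd_op_L2 T \<longleftrightarrow>
     (\<forall>f\<in>L2p. T f \<in> L2p) \<and>
     (\<forall>f\<in>L2p. \<forall>g\<in>L2p. aeq f g \<longrightarrow> aeq (T f) (T g)) \<and>
     (\<forall>f\<in>L2p. \<forall>g\<in>L2p. aeq (T (\<lambda>x. f x + g x)) (\<lambda>x. T f x + T g x)) \<and>
     (\<forall>c. \<forall>f\<in>L2p. aeq (T (\<lambda>x. c * f x)) (\<lambda>x. c * T f x)) \<and>
     (\<exists>C. \<forall>f\<in>L2p. L2norm (T f) \<le> C * L2norm f)"

text \<open>The truncated Fourier--Plancherel operator: the bounded operator on L^2(R^+) given, for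
integrable x, by (F x)(t) = (2 pi)^(-1/2) * integral over R^+ of x(xi) e^(i t xi), t > 0.
(By density of L^1 \<inter> L^2 and boundedness this determines the operator on a.e.-classes.)\<close>

definition is_trunc_FP :: "((real \<Rightarrow> complex) \<Rightarrow> (real \<Rightarrow> complex)) \<Rightarrow> bool" where
  "is_trunc_FP T \<longleftrightarrow> bdd_op_L2 T \<and>
     (\<forall>f\<in>L2p. set_integrable lborel {0<..} f \<longrightarrow>
        (AE t in lborel. 0 < t \<longrightarrow>
           T f t = complex_of_real (1 / sqrt (2 * pi)) *
                   (LINT \<xi>:{0<..}|lborel. f \<xi> * exp (\<i> * complex_of_real t * complex_of_real \<xi>))))"

record 'h cH =
  hadd :: "'h \<Rightarrow> 'h \<Rightarrow> 'h"
  hzero :: 'h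
  hsmul :: "complex \<Rightarrow> 'h \<Rightarrow> 'h"
  hip :: "'h \<Rightarrow> 'h \<Rightarrow> complex"

definition hnorm :: "'h cH \<Rightarrow> 'h \<Rightarrow> real" where
  "hnorm H x = sqrt (Re (hip H x x))"

definition hdiff :: "'h cH \<Rightarrow> 'h \<Rightarrow> 'h \<Rightarrow> 'h" where
  "hdiff H x y = hadd H x (hsmul H (-1) y)"

definition complex_hilbert_space :: "'h cH \<Rightarrow> bool" where
  "complex_hilbert_space H \<longleftrightarrow>
     (\<forall>x y z. hadd H (hadd H x y) z = hadd H x (hadd H y z)) \<and>
     (\<forall>x y. hadd H x y = hadd H y x) \<and>
     (\<forall>x. hadd H (hzero H) x = x) \<and>
     (\<forall>x. \<exists>y. hadd H x y = hzero H) \<and>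
     (\<forall>x. hsmul H 1 x = x) \<and>
     (\<forall>a b x. hsmul H a (hsmul H b x) = hsmul H (a * b) x) \<and>
     (\<forall>a x y. hsmul H a (hadd H x y) = hadd H (hsmul H a x) (hsmul H a y)) \<and>
     (\<forall>a b x. hsmul H (a + b) x = hadd H (hsmul H a x) (hsmul H b x)) \<and>
     (\<forall>x y z. hip H (hadd H x y) z = hip H x z + hip H y z) \<and>
     (\<forall>a x y. hip H (hsmul H a x) y = a * hip H x y) \<and>
     (\<forall>x y. hip H y x = cnj (hip H x y)) \<and>
     (\<forall>x. Im (hip H x x) = 0 \<and> 0 \<le> Re (hip H x x)) \<and>
     (\<forall>x. hip H x x = 0 \<longrightarrow> x = hzero H) \<and>
     (\<forall>X :: nat \<Rightarrow> 'h.
        (\<forall>e>0. \<exists>M. \<forall>m\<ge>M. \<forall>n\<ge>M. hnorm H (hdiff H (X m) (X n)) < e) \<longrightarrow>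
        (\<exists>L. (\<lambda>n. hnorm H (hdiff H (X n) L)) \<longlonglongrightarrow> 0))"

definition bdd_op_H :: "'h cH \<Rightarrow> ('h \<Rightarrow> 'h) \<Rightarrow> bool" where
  "bdd_op_H H N \<longleftrightarrow>
     (\<forall>x y. N (hadd H x y) = hadd H (N x) (N y)) \<and>
     (\<forall>a x. N (hsmul H a x) = hsmul H a (N x)) \<and>
     (\<exists>C. \<forall>x. hnorm H (N x) \<le> C * hnorm H x)"

definition normal_op :: "'h cH \<Rightarrow> ('h \<Rightarrow> 'h) \<Rightarrow> bool" where
  "normal_op H N \<longleftrightarrow> bdd_op_H H N \<and>
     (\<exists>Nstar. bdd_op_H H Nstar \<and>
        (\<forall>x y. hip H (N x) y = hip H x (Nstar y)) \<and>
        (\<forall>x. N (Nstar x) = Nstar (N x)))"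

definition bdd_op_L2_H :: "'h cH \<Rightarrow> ((real \<Rightarrow> complex) \<Rightarrow> 'h) \<Rightarrow> bool" where
  "bdd_op_L2_H H S \<longleftrightarrow>
     (\<forall>f\<in>L2p. \<forall>g\<in>L2p. aeq f g \<longrightarrow> S f = S g) \<and>
     (\<forall>f\<in>L2p. \<forall>g\<in>L2p. S (\<lambda>x. f x + g x) = hadd H (S f) (S g)) \<and>
     (\<forall>c. \<forall>f\<in>L2p. S (\<lambda>x. c * f x) = hsmul H c (S f)) \<and>
     (\<exists>C. \<forall>f\<in>L2p. hnorm H (S f) \<le> C * L2norm f)"

definition bdd_op_H_L2 :: "'h cH \<Rightarrow> ('h \<Rightarrow> (real \<Rightarrow> complex)) \<Rightarrow> bool" where
  "bdd_op_H_L2 H R \<longleftrightarrow>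
     (\<forall>x. R x \<in> L2p) \<and>
     (\<forall>x y. aeq (R (hadd H x y)) (\<lambda>t. R x t + R y t)) \<and>
     (\<forall>a x. aeq (R (hsmul H a x)) (\<lambda>t. a * R x t)) \<and>
     (\<exists>C. \<forall>x. L2norm (R x) \<le> C * hnorm H x)"

end

theory Submission
  imports Defs "HOL-Probability.Sinc_Integral"
begin


lemma L2norm_aeq:
  assumes "f \<in> L2p" "g \<in> L2p" "aeq f g"
  shows "L2norm f = L2norm g"
proof -
  have [measurable]: "f \<in> borel_measurable lborel" "g \<in> borel_measurable lborel"
    using assms unfolding L2p_def by auto
  have "AE x \<in> {0<..} in lborel. (cmod (f x))\<^sup>2 = (cmod (g x))\<^sup>2"
    using assms(3) unfolding aeq_def by (auto elim!: eventually_mono)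
  then have "(LINT x:{0<..}|lborel. (cmod (f x))\<^sup>2) = (LINT x:{0<..}|lborel. (cmod (g x))\<^sup>2)"
    by (intro set_lebesgue_integral_cong_AE) auto
  then show ?thesis unfolding L2norm_def by simp
qed

lemma L2norm_nonneg: "L2norm f \<ge> 0"
  unfolding L2norm_def set_lebesgue_integral_def
  by (simp add: Bochner_Integration.integral_nonneg_AE)

context
  fixes H :: "'h cH"
  assumes HS: "complex_hilbert_space H"
begin

lemma hip_add_left: "hip H (hadd H x y) z = hip H x z + hip H y z"
  using HS unfolding complex_hilbert_space_def by blast
lemma hip_smul_left: "hip H (hsmul H a x) y = a * hip H x y"
  using HS unfolding complex_hilbert_space_def by blast
lemma hip_conj: "hip H y x = cnj (hip H x y)"
  using HS unfolding complex_hilbert_space_def by blast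
lemma hip_self: "Im (hip H x x) = 0" "0 \<le> Re (hip H x x)"
  using HS unfolding complex_hilbert_space_def by blast+

lemma hnorm_nonneg: "hnorm H x \<ge> 0"
  unfolding hnorm_def using hip_self(2) by simp

lemma hip_self_real: "hip H x x = complex_of_real (Re (hip H x x))"
  using hip_self(1)[of x] by (simp add: complex_eq_iff)

lemma hnorm_sq: "(hnorm H x)\<^sup>2 = Re (hip H x x)"
  unfolding hnorm_def using hip_self(2)[of x] by simp

lemma hip_add_right: "hip H x (hadd H y z) = hip H x y + hip H x z"
proof -
  have "hip H x (hadd H y z) = cnj (hip H (hadd H y z) x)" by (rule hip_conj)
  also have "\<dots> = cnj (hip H y x) + cnj (hip H z x)" by (simp add: hip_add_left)
  also have "\<dots> = hip H x y + hip H x z" by (metis hip_conj)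
  finally show ?thesis .
qed

lemma hip_smul_right: "hip H x (hsmul H a y) = cnj a * hip H x y"
proof -
  have "hip H x (hsmul H a y) = cnj (hip H (hsmul H a y) x)" by (rule hip_conj)
  also have "\<dots> = cnj a * cnj (hip H y x)" by (simp add: hip_smul_left)
  also have "\<dots> = cnj a * hip H x y" by (metis hip_conj)
  finally show ?thesis .
qed

lemma cauchy_schwarz: "cmod (hip H x y) \<le> hnorm H x * hnorm H y"
proof -
  define p where "p = hip H x y"
  define X where "X = Re (hip H x x)"
  define Y where "Y = Re (hip H y y)"
  have X0: "X \<ge> 0" and Y0: "Y \<ge> 0" unfolding X_def Y_def using hip_self by auto
  have key: "0 \<le> X - 2 * r * (cmod p)\<^sup>2 + r\<^sup>2 * (cmod p)\<^sup>2 * Y" for r :: real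
  proof -
    define \<mu> where "\<mu> = - complex_of_real r * p"
    define z where "z = hadd H x (hsmul H \<mu> y)"
    have "hip H z z = hip H x x + \<mu> * hip H y x + cnj \<mu> * hip H x y + \<mu> * cnj \<mu> * hip H y y"
      unfolding z_def by (simp add: hip_add_left hip_add_right hip_smul_left hip_smul_right algebra_simps)
    also have "hip H y x = cnj p" unfolding p_def by (rule hip_conj)
    finally have e: "hip H z z = hip H x x + \<mu> * cnj p + cnj \<mu> * p + \<mu> * cnj \<mu> * hip H y y"
      unfolding p_def .
    have "Re (hip H z z) = X - 2 * r * (cmod p)\<^sup>2 + r\<^sup>2 * (cmod p)\<^sup>2 * Y"
      unfolding e X_def Y_def \<mu>_def
      apply (subst (2) hip_self_real)
      apply (simp add: cmod_power2)
      apply (simp add: power2_eq_square algebra_simps)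
      done
    moreover have "0 \<le> Re (hip H z z)" by (rule hip_self)
    ultimately show ?thesis by simp
  qed
  have "(cmod p)\<^sup>2 \<le> X * Y"
  proof (cases "Y = 0")
    case True
    have "(cmod p)\<^sup>2 \<le> 0"
    proof (rule ccontr)
      assume "\<not> (cmod p)\<^sup>2 \<le> 0"
      then have q: "(cmod p)\<^sup>2 > 0" by simp
      have "0 \<le> X - 2 * ((X + 1) / (cmod p)\<^sup>2) * (cmod p)\<^sup>2"
        using key[of "(X + 1) / (cmod p)\<^sup>2"] True by simp
      then show False using q X0 by simp
    qed
    then show ?thesis using True by simp
  next
    case False
    then have Yp: "Y > 0" using Y0 by simp
    have "0 \<le> X - 2 * (1/Y) * (cmod p)\<^sup>2 + (1/Y)\<^sup>2 * (cmod p)\<^sup>2 * Y"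
      by (rule key)
    also have "\<dots> = X - (cmod p)\<^sup>2 / Y" using Yp by (simp add: power2_eq_square field_simps)
    finally show ?thesis using Yp by (simp add: field_simps)
  qed
  then have "cmod p \<le> sqrt (X * Y)" by (simp add: real_le_rsqrt)
  then show ?thesis unfolding p_def hnorm_def X_def Y_def by (simp add: real_sqrt_mult)
qed

lemma normal_ineq:
  assumes "normal_op H N"
  shows "(hnorm H (N u))\<^sup>2 \<le> hnorm H u * hnorm H (N (N u))"
proof -
  obtain Ns where adj: "\<And>x y. hip H (N x) y = hip H x (Ns y)" and comm: "\<And>x. N (Ns x) = Ns (N x)"
    using assms unfolding normal_op_def by blast
  have adj2: "hip H (Ns x) y = hip H x (N y)" for x y
    by (metis adj hip_conj complex_cnj_cnj)
  have e1: "(hnorm H (N u))\<^sup>2 = Re (hip H u (Ns (N u)))"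
    by (simp add: hnorm_sq adj)
  have "(hnorm H (Ns v))\<^sup>2 = (hnorm H (N v))\<^sup>2" for v
  proof -
    have "hip H (Ns v) (Ns v) = hip H v (N (Ns v))" by (rule adj2)
    also have "\<dots> = hip H v (Ns (N v))" by (simp add: comm)
    also have "\<dots> = hip H (N v) (N v)" by (simp add: adj)
    finally show ?thesis by (simp add: hnorm_sq)
  qed
  then have e2: "hnorm H (Ns v) = hnorm H (N v)" for v
    by (metis hnorm_nonneg power2_eq_iff_nonneg)
  have "Re (hip H u (Ns (N u))) \<le> cmod (hip H u (Ns (N u)))" by (rule complex_Re_le_cmod)
  also have "\<dots> \<le> hnorm H u * hnorm H (Ns (N u))" by (rule cauchy_schwarz)
  also have "\<dots> = hnorm H u * hnorm H (N (N u))" by (simp add: e2)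
  finally show ?thesis using e1 by simp
qed

end

lemma L2p_norm_bound_pos:
  assumes "\<exists>C. \<forall>f\<in>A. n1 f \<le> C * (n2 f :: real)" "\<And>f. n2 f \<ge> 0"
  shows "\<exists>C\<ge>0. \<forall>f\<in>A. n1 f \<le> C * n2 f"
proof -
  obtain C where C: "\<forall>f\<in>A. n1 f \<le> C * n2 f" using assms(1) by blast
  have "\<forall>f\<in>A. n1 f \<le> max C 0 * n2 f"
    using C assms(2) by (meson max.cobounded1 mult_right_mono order_trans)
  then show ?thesis by (intro exI[of _ "max C 0"]) auto
qed

lemma abstract_part:
  fixes T :: "(real \<Rightarrow> complex) \<Rightarrow> (real \<Rightarrow> complex)" and H :: "'h cH"
  assumes HS: "complex_hilbert_space H" and BT: "bdd_op_L2 T"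
    and S: "bdd_op_L2_H H S" and Si: "bdd_op_H_L2 H Sinv"
    and inv1: "\<forall>x. S (Sinv x) = x" and N: "normal_op H N"
    and sim: "\<forall>f\<in>L2p. aeq (T f) (Sinv (N (S f)))"
  shows "\<exists>K. \<forall>f\<in>L2p. (L2norm (T f))\<^sup>2 \<le> K * L2norm (T (T f)) * L2norm f"
proof -
  obtain C1 where C1: "C1 \<ge> 0" "\<forall>x\<in>UNIV. L2norm (Sinv x) \<le> C1 * hnorm H x"
    using L2p_norm_bound_pos[of UNIV "\<lambda>x. L2norm (Sinv x)" "hnorm H"] Si hnorm_nonneg[OF HS]
    unfolding bdd_op_H_L2_def by blast
  obtain C2 where C2: "C2 \<ge> 0" "\<forall>f\<in>L2p. hnorm H (S f) \<le> C2 * L2norm f"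
    using L2p_norm_bound_pos[of L2p "\<lambda>f. hnorm H (S f)" L2norm] S L2norm_nonneg
    unfolding bdd_op_L2_H_def by blast
  have TL: "\<forall>f\<in>L2p. T f \<in> L2p" using BT unfolding bdd_op_L2_def by blast
  have SiL: "\<forall>x. Sinv x \<in> L2p" using Si unfolding bdd_op_H_L2_def by blast
  have Saeq: "\<forall>f\<in>L2p. \<forall>g\<in>L2p. aeq f g \<longrightarrow> S f = S g" using S unfolding bdd_op_L2_H_def by blast
  show ?thesis
  proof (intro exI ballI)
    fix f assume f: "f \<in> L2p"
    define u where "u = S f"
    have Tf: "T f \<in> L2p" using TL f by blast
    have TTf: "T (T f) \<in> L2p" using TL Tf by blast
    have a1: "L2norm (T f) = L2norm (Sinv (N u))"
      unfolding u_def by (rule L2norm_aeq) (use Tf SiL sim f in auto)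
    have STf: "S (T f) = N u"
      using Saeq Tf SiL sim f inv1 unfolding u_def by metis
    have STTf: "S (T (T f)) = N (N u)"
      using Saeq[rule_format, OF TTf SiL[rule_format, of "N (S (T f))"]] sim Tf inv1 STf by metis
    have b1: "L2norm (T f) \<le> C1 * hnorm H (N u)" using a1 C1 by simp
    have b2: "(hnorm H (N u))\<^sup>2 \<le> hnorm H u * hnorm H (N (N u))"
      by (rule normal_ineq[OF HS N])
    have b3: "hnorm H u \<le> C2 * L2norm f" using C2 f unfolding u_def by blast
    have b4: "hnorm H (N (N u)) \<le> C2 * L2norm (T (T f))" using C2 TTf STTf by metis
    have "(L2norm (T f))\<^sup>2 \<le> (C1 * hnorm H (N u))\<^sup>2"
      using b1 L2norm_nonneg by (intro power_mono) auto
    also have "\<dots> = C1\<^sup>2 * (hnorm H (N u))\<^sup>2" by (simp add: power_mult_distrib)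
    also have "\<dots> \<le> C1\<^sup>2 * (hnorm H u * hnorm H (N (N u)))"
      using b2 by (intro mult_left_mono) auto
    also have "\<dots> \<le> C1\<^sup>2 * ((C2 * L2norm f) * (C2 * L2norm (T (T f))))"
      using b3 b4 hnorm_nonneg[OF HS] C2(1) L2norm_nonneg by (intro mult_left_mono mult_mono) auto
    also have "\<dots> = (C1\<^sup>2 * C2\<^sup>2) * L2norm (T (T f)) * L2norm f"
      by (simp add: power2_eq_square algebra_simps)
    finally show "(L2norm (T f))\<^sup>2 \<le> (C1\<^sup>2 * C2\<^sup>2) * L2norm (T (T f)) * L2norm f" .
  qed
qed


lemma FTC_Ioi:
  fixes f F :: "real \<Rightarrow> complex"
  assumes F: "\<And>x. 0 < x \<Longrightarrow> (F has_vector_derivative f x) (at x)"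
    and fc: "\<And>x. 0 < x \<Longrightarrow> isCont f x"
    and fi: "set_integrable lborel {0<..} f"
    and A: "(F \<longlongrightarrow> A) (at_right 0)"
    and B: "(F \<longlongrightarrow> B) at_top"
  shows "(LINT x:{0<..}|lborel. f x) = B - A"
proof -
  have "(LBINT x=ereal 0..\<infinity>. f x) = B - A"
  proof (rule interval_integral_FTC_integrable)
    show "set_integrable lborel (einterval (ereal 0) \<infinity>) f" using fi by simp
    show "((F \<circ> real_of_ereal) \<longlongrightarrow> A) (at_right (ereal 0))"
      using A by (simp add: ereal_tendsto_simps1)
    show "((F \<circ> real_of_ereal) \<longlongrightarrow> B) (at_left \<infinity>)"
      using B by (simp add: ereal_tendsto_simps1)
  qed (use F fc in auto)
  then show ?thesis by (simp add: interval_integral_to_infinity_eq)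
qed

lemma exp_integral_Ioi:
  fixes z :: complex
  assumes z: "Re z < 0"
  shows "set_integrable lborel {0<..} (\<lambda>t. exp (z * of_real t))"
    and "(LINT t:{0<..}|lborel. exp (z * of_real t)) = - 1 / z"
proof -
  have z0: "z \<noteq> 0" using z by auto
  have nr: "norm (exp (z * of_real t)) = exp (Re z * t)" for t
    by (simp add: norm_exp_eq_Re)
  have ri: "set_integrable lborel {0<..} (\<lambda>t. exp (Re z * t))"
  proof -
    have "set_integrable lborel (einterval (ereal 0) \<infinity>) (\<lambda>t. exp (Re z * t))"
    proof (rule interval_integral_FTC_nonneg(1))
      show "((\<lambda>t. exp (Re z * t) / Re z) has_real_derivative exp (Re z * t)) (at t)" for t
        using z by (auto intro!: derivative_eq_intros)
      show "(((\<lambda>t. exp (Re z * t) / Re z) \<circ> real_of_ereal) \<longlongrightarrow> 1 / Re z) (at_right (ereal 0))"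
        unfolding ereal_tendsto_simps1 using z by (auto intro!: tendsto_eq_intros)
      show "(((\<lambda>t. exp (Re z * t) / Re z) \<circ> real_of_ereal) \<longlongrightarrow> 0) (at_left \<infinity>)"
        unfolding ereal_tendsto_simps1 using z by real_asymp
    qed auto
    then show ?thesis by simp
  qed
  show si: "set_integrable lborel {0<..} (\<lambda>t. exp (z * of_real t))"
    by (rule set_integrable_bound[OF ri]) (auto simp: nr set_borel_measurable_def)
  show "(LINT t:{0<..}|lborel. exp (z * of_real t)) = - 1 / z"
  proof -
    have "(LINT t:{0<..}|lborel. exp (z * of_real t)) = 0 - 1 / z"
    proof (rule FTC_Ioi[where F = "\<lambda>t. exp (z * of_real t) / z"])
      show "((\<lambda>t. exp (z * of_real t) / z) has_vector_derivative exp (z * of_real x)) (at x)" for x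
      proof -
        have "((\<lambda>w. exp (z * w) / z) has_field_derivative exp (z * of_real x)) (at (of_real x))"
          using z0 by (auto intro!: derivative_eq_intros)
        then show ?thesis by (rule has_vector_derivative_real_field)
      qed
      show "((\<lambda>t. exp (z * of_real t) / z) \<longlongrightarrow> 1 / z) (at_right 0)"
        using z0 by (auto intro!: tendsto_eq_intros)
      show "((\<lambda>t. exp (z * of_real t) / z) \<longlongrightarrow> 0) at_top"
      proof -
        have "((\<lambda>t. exp (Re z * t)) \<longlongrightarrow> 0) at_top" using z by real_asymp
        then have "((\<lambda>t. exp (Re z * t) / cmod z) \<longlongrightarrow> 0) at_top" by (rule tendsto_divide_zero)
        then show ?thesis
          by (rule tendsto_norm_zero_cancel[OF Lim_transform_eventually])
             (auto simp: norm_divide nr)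
      qed
    qed (use si in auto)
    then show ?thesis by simp
  qed
qed


lemma exp_combine:
  "exp (\<i> * of_real t * of_real u) * exp (\<i> * of_real s * of_real t) * of_real (exp (- e * t))
   = exp ((\<i> * of_real (s + u) - of_real e) * of_real t)"
proof -
  have "exp (\<i> * of_real t * of_real u) * exp (\<i> * of_real s * of_real t) * of_real (exp (- e * t))
     = exp (\<i> * of_real t * of_real u) * exp (\<i> * of_real s * of_real t) * exp (of_real (- e * t))"
    by (simp only: exp_of_real)
  also have "\<dots> = exp (\<i> * of_real t * of_real u + \<i> * of_real s * of_real t + of_real (- e * t))"
    by (simp only: mult_exp_exp)
  also have "\<i> * of_real t * of_real u + \<i> * of_real s * of_real t + of_real (- e * t)
     = (\<i> * of_real (s + u) - of_real e) * (of_real t :: complex)"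
    by (simp add: algebra_simps)
  finally show ?thesis .
qed

lemma stieltjes_eps:
  fixes x g :: "real \<Rightarrow> complex" and s e :: real
  assumes xm[measurable]: "x \<in> borel_measurable lborel"
    and xi: "set_integrable lborel {0<..} x"
    and gdef: "\<And>t. 0 < t \<Longrightarrow> g t = (LINT u:{0<..}|lborel. x u * exp (\<i> * of_real t * of_real u))"
    and s: "0 < s" and e: "0 < e"
  shows "(LINT t:{0<..}|lborel. g t * exp (\<i> * of_real s * of_real t) * of_real (exp (- e * t)))
       = (LINT u:{0<..}|lborel. x u / (of_real e - \<i> * of_real (s + u)))"
proof -
  define F where "F = (\<lambda>u t. indicator {0<..} u *\<^sub>R (indicator {0<..} t *\<^sub>R
                       (x u * exp ((\<i> * of_real (s + u) - of_real e) * of_real t))))"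
  have Fm[measurable]: "(\<lambda>(u, t). F u t) \<in> borel_measurable (lborel \<Otimes>\<^sub>M lborel)"
    unfolding F_def by measurable
  have nE: "norm (exp ((\<i> * of_real (s + u) - of_real e) * of_real t)) = exp (- e * t)" for u t
    by (simp add: norm_exp_eq_Re)
  have Ei: "set_integrable lborel {0<..} (\<lambda>t. exp ((\<i> * of_real (s + u) - of_real e) * of_real t))"
    and Ev: "(LINT t:{0<..}|lborel. exp ((\<i> * of_real (s + u) - of_real e) * of_real t))
              = - 1 / (\<i> * of_real (s + u) - of_real e)" for u
    using exp_integral_Ioi[of "\<i> * of_real (s + u) - of_real e"] e by auto
  define c where "c = (\<integral>t. indicator {0<..} t * exp (- e * t) \<partial>lborel)"
  have nF: "(\<integral>t. norm (F u t) \<partial>lborel) = indicator {0<..} u * norm (x u) * c" for u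
  proof -
    have "(\<lambda>t. norm (F u t)) = (\<lambda>t. (indicator {0<..} u * norm (x u)) * (indicator {0<..} t * exp (- e * t)))"
      by (rule ext) (simp add: F_def norm_mult nE split: split_indicator)
    then show ?thesis unfolding c_def by simp
  qed
  have prodint: "integrable (lborel \<Otimes>\<^sub>M lborel) (\<lambda>(u, t). F u t)"
  proof (rule lborel_pair.Fubini_integrable)
    show "integrable lborel (\<lambda>u. \<integral>t. norm (case (u, t) of (u, t) \<Rightarrow> F u t) \<partial>lborel)"
    proof -
      have "integrable lborel (\<lambda>u. norm (indicator {0<..} u *\<^sub>R x u))"
        using xi unfolding set_integrable_def by (rule integrable_norm)
      then have "integrable lborel (\<lambda>u. indicator {0<..} u * norm (x u))"
        by (simp add: abs_mult)
      then have "integrable lborel (\<lambda>u. indicator {0<..} u * norm (x u) * c)"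
        by (rule integrable_mult_left)
      then show ?thesis by (simp only: case_prod_conv nF)
    qed
    show "AE u in lborel. integrable lborel (\<lambda>t. case (u, t) of (u, t) \<Rightarrow> F u t)"
    proof (rule AE_I2)
      fix u
      have "integrable lborel (\<lambda>t. (indicator {0<..} u *\<^sub>R x u) * (indicator {0<..} t *\<^sub>R
               exp ((\<i> * of_real (s + u) - of_real e) * of_real t)))"
        using Ei[of u] unfolding set_integrable_def by (rule integrable_mult_right)
      moreover have "(\<lambda>t. case (u, t) of (u, t) \<Rightarrow> F u t) = (\<lambda>t. (indicator {0<..} u *\<^sub>R x u) * (indicator {0<..} t *\<^sub>R
               exp ((\<i> * of_real (s + u) - of_real e) * of_real t)))"
        by (auto simp: F_def split: split_indicator)
      ultimately show "integrable lborel (\<lambda>t. case (u, t) of (u, t) \<Rightarrow> F u t)" by simp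
    qed
  qed (simp add: Fm)
  have lhs: "(LINT t:{0<..}|lborel. g t * exp (\<i> * of_real s * of_real t) * of_real (exp (- e * t)))
      = (\<integral>t. (\<integral>u. F u t \<partial>lborel) \<partial>lborel)"
    unfolding set_lebesgue_integral_def
  proof (rule Bochner_Integration.integral_cong[OF refl])
    fix t :: real
    show "indicator {0<..} t *\<^sub>R (g t * exp (\<i> * of_real s * of_real t) * of_real (exp (- e * t)))
          = (\<integral>u. F u t \<partial>lborel)"
    proof (cases "0 < t")
      case True
      have "g t * exp (\<i> * of_real s * of_real t) * of_real (exp (- e * t))
         = (LINT u:{0<..}|lborel. x u * exp (\<i> * of_real t * of_real u)) * (exp (\<i> * of_real s * of_real t) * of_real (exp (- e * t)))"
        using gdef[OF True] by simp
      also have "\<dots> = (LINT u:{0<..}|lborel. x u * exp (\<i> * of_real t * of_real u) * (exp (\<i> * of_real s * of_real t) * of_real (exp (- e * t))))"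
        by (rule set_integral_mult_left[symmetric])
      also have "\<dots> = (\<integral>u. F u t \<partial>lborel)"
        unfolding set_lebesgue_integral_def
      proof (intro Bochner_Integration.integral_cong refl)
        fix u
        have ec: "exp (\<i> * of_real t * of_real u) * (exp (\<i> * of_real s * of_real t) * of_real (exp (- e * t)))
            = exp ((\<i> * of_real (s + u) - of_real e) * of_real t)"
          using exp_combine[of t u s e] by (simp only: mult.assoc)
        show "indicator {0<..} u *\<^sub>R (x u * exp (\<i> * of_real t * of_real u) * (exp (\<i> * of_real s * of_real t) * of_real (exp (- e * t)))) = F u t"
          using ec by (simp add: F_def True mult.assoc)
      qed
      finally show ?thesis using True by simp
    qed (simp add: F_def)
  qed
  also have "\<dots> = (\<integral>u. (\<integral>t. F u t \<partial>lborel) \<partial>lborel)"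
    by (rule lborel_pair.Fubini_integral[OF prodint])
  also have "\<dots> = (LINT u:{0<..}|lborel. x u / (of_real e - \<i> * of_real (s + u)))"
    unfolding set_lebesgue_integral_def
  proof (rule Bochner_Integration.integral_cong[OF refl])
    fix u :: real
    have "(\<integral>t. F u t \<partial>lborel) = indicator {0<..} u *\<^sub>R (x u *
        (LINT t:{0<..}|lborel. exp ((\<i> * of_real (s + u) - of_real e) * of_real t)))"
    proof -
      have "(\<lambda>t. F u t) = (\<lambda>t. (indicator {0<..} u *\<^sub>R x u) * (indicator {0<..} t *\<^sub>R
               exp ((\<i> * of_real (s + u) - of_real e) * of_real t)))"
        by (auto simp: F_def split: split_indicator)
      then have "(\<integral>t. F u t \<partial>lborel) = (indicator {0<..} u *\<^sub>R x u) * (\<integral>t. indicator {0<..} t *\<^sub>R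
               exp ((\<i> * of_real (s + u) - of_real e) * of_real t) \<partial>lborel)"
        by (simp only: integral_mult_right_zero)
      then show ?thesis unfolding set_lebesgue_integral_def by simp
    qed
    also have "\<dots> = indicator {0<..} u *\<^sub>R (x u / (of_real e - \<i> * of_real (s + u)))"
      unfolding Ev by (simp add: divide_simps minus_divide_right)
    finally show "(\<integral>t. F u t \<partial>lborel) = indicator {0<..} u *\<^sub>R (x u / (of_real e - \<i> * of_real (s + u)))" .
  qed
  finally show ?thesis .
qed


lemma stieltjes:
  fixes x g :: "real \<Rightarrow> complex" and s :: real
  assumes xm[measurable]: "x \<in> borel_measurable lborel"
    and xi: "set_integrable lborel {0<..} x"
    and gm[measurable]: "g \<in> borel_measurable lborel"
    and gi: "set_integrable lborel {0<..} g"
    and gdef: "\<And>t. 0 < t \<Longrightarrow> g t = (LINT u:{0<..}|lborel. x u * exp (\<i> * of_real t * of_real u))"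
    and s: "0 < s"
  shows "(LINT t:{0<..}|lborel. g t * exp (\<i> * of_real s * of_real t))
       = \<i> * (LINT u:{0<..}|lborel. x u / of_real (s + u))"
proof -
  define e where "e = (\<lambda>n::nat. inverse (real (Suc n)))"
  have e0: "e \<longlonglongrightarrow> 0" unfolding e_def by (rule LIMSEQ_inverse_real_of_nat)
  have epos: "0 < e n" for n unfolding e_def by simp
  have L1: "(\<lambda>n. LINT t:{0<..}|lborel. g t * exp (\<i> * of_real s * of_real t) * of_real (exp (- e n * t)))
      \<longlonglongrightarrow> (LINT t:{0<..}|lborel. g t * exp (\<i> * of_real s * of_real t))"
    unfolding set_lebesgue_integral_def
  proof (rule integral_dominated_convergence[where w = "\<lambda>t. indicator {0<..} t * norm (g t)"])
    show "integrable lborel (\<lambda>t. indicator {0<..} t * norm (g t))"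
    proof -
      have "integrable lborel (\<lambda>t. norm (indicator {0<..} t *\<^sub>R g t))"
        using gi unfolding set_integrable_def by (rule integrable_norm)
      then show ?thesis by (simp add: abs_mult)
    qed
    show "AE t in lborel. (\<lambda>n. indicator {0<..} t *\<^sub>R (g t * exp (\<i> * of_real s * of_real t) * of_real (exp (- e n * t))))
         \<longlonglongrightarrow> indicator {0<..} t *\<^sub>R (g t * exp (\<i> * of_real s * of_real t))"
    proof (rule AE_I2)
      fix t :: real
      have lim1: "(\<lambda>n. exp (- e n * t)) \<longlonglongrightarrow> exp (- 0 * t)"
        by (intro tendsto_intros) (rule e0)
      then have "(\<lambda>n. indicator {0<..} t *\<^sub>R (g t * exp (\<i> * of_real s * of_real t) * of_real (exp (- e n * t))))
         \<longlonglongrightarrow> indicator {0<..} t *\<^sub>R (g t * exp (\<i> * of_real s * of_real t) * of_real (exp (- 0 * t)))"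
        by (intro tendsto_scaleR tendsto_const tendsto_mult tendsto_of_real lim1)
      then show "(\<lambda>n. indicator {0<..} t *\<^sub>R (g t * exp (\<i> * of_real s * of_real t) * of_real (exp (- e n * t))))
         \<longlonglongrightarrow> indicator {0<..} t *\<^sub>R (g t * exp (\<i> * of_real s * of_real t))" by simp
    qed
    show "AE t in lborel. norm (indicator {0<..} t *\<^sub>R (g t * exp (\<i> * of_real s * of_real t) * of_real (exp (- e n * t))))
          \<le> indicator {0<..} t * norm (g t)" for n
    proof (rule AE_I2)
      fix t :: real
      have "exp (- e n * t) \<le> 1" if "0 < t" using that epos[of n] by simp
      then show "norm (indicator {0<..} t *\<^sub>R (g t * exp (\<i> * of_real s * of_real t) * of_real (exp (- e n * t))))
          \<le> indicator {0<..} t * norm (g t)"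
        by (auto simp: norm_mult norm_exp_eq_Re split: split_indicator intro!: mult_left_le)
    qed
  qed simp_all
  have L2: "(\<lambda>n. LINT u:{0<..}|lborel. x u / (of_real (e n) - \<i> * of_real (s + u)))
      \<longlonglongrightarrow> (LINT u:{0<..}|lborel. x u / (- \<i> * of_real (s + u)))"
    unfolding set_lebesgue_integral_def
  proof (rule integral_dominated_convergence[where w = "\<lambda>u. indicator {0<..} u * norm (x u) / s"])
    show "integrable lborel (\<lambda>u. indicator {0<..} u * norm (x u) / s)"
    proof -
      have "integrable lborel (\<lambda>t. norm (indicator {0<..} t *\<^sub>R x t))"
        using xi unfolding set_integrable_def by (rule integrable_norm)
      then have "integrable lborel (\<lambda>t. indicator {0<..} t * norm (x t))" by (simp add: abs_mult)
      then show ?thesis by (rule integrable_divide)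
    qed
    show "AE u in lborel. (\<lambda>n. indicator {0<..} u *\<^sub>R (x u / (of_real (e n) - \<i> * of_real (s + u))))
         \<longlonglongrightarrow> indicator {0<..} u *\<^sub>R (x u / (- \<i> * of_real (s + u)))"
    proof (rule AE_I2)
      fix u :: real
      show "(\<lambda>n. indicator {0<..} u *\<^sub>R (x u / (of_real (e n) - \<i> * of_real (s + u))))
         \<longlonglongrightarrow> indicator {0<..} u *\<^sub>R (x u / (- \<i> * of_real (s + u)))"
      proof (cases "0 < u")
        case True
        have ne: "(0::complex) - \<i> * of_real (s + u) \<noteq> 0" using s True by (simp add: complex_eq_iff)
        have "(\<lambda>n. x u / (of_real (e n) - \<i> * of_real (s + u))) \<longlonglongrightarrow> x u / (of_real 0 - \<i> * of_real (s + u))"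
          using ne by (intro tendsto_intros e0) auto
        then show ?thesis using True by simp
      qed simp
    qed
    show "AE u in lborel. norm (indicator {0<..} u *\<^sub>R (x u / (of_real (e n) - \<i> * of_real (s + u))))
          \<le> indicator {0<..} u * norm (x u) / s" for n
    proof (rule AE_I2)
      fix u :: real
      show "norm (indicator {0<..} u *\<^sub>R (x u / (of_real (e n) - \<i> * of_real (s + u))))
          \<le> indicator {0<..} u * norm (x u) / s"
      proof (cases "0 < u")
        case True
        have "s \<le> \<bar>Im (of_real (e n) - \<i> * of_real (s + u))\<bar>" using True s by simp
        also have "\<dots> \<le> cmod (of_real (e n) - \<i> * of_real (s + u))" by (rule abs_Im_le_cmod)
        finally have d: "s \<le> cmod (of_real (e n) - \<i> * of_real (s + u))" .
        have "norm (x u / (of_real (e n) - \<i> * of_real (s + u))) = norm (x u) / cmod (of_real (e n) - \<i> * of_real (s + u))"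
          by (simp add: norm_divide)
        also have "\<dots> \<le> norm (x u) / s" using d s by (intro divide_left_mono) (auto intro!: mult_pos_pos)
        finally show ?thesis using True by simp
      qed simp
    qed
  qed simp_all
  have eq: "(LINT t:{0<..}|lborel. g t * exp (\<i> * of_real s * of_real t) * of_real (exp (- e n * t)))
      = (LINT u:{0<..}|lborel. x u / (of_real (e n) - \<i> * of_real (s + u)))" for n
    by (rule stieltjes_eps[OF xm xi gdef s epos])
  have "(LINT t:{0<..}|lborel. g t * exp (\<i> * of_real s * of_real t))
      = (LINT u:{0<..}|lborel. x u / (- \<i> * of_real (s + u)))"
    using L1 L2 unfolding eq by (rule LIMSEQ_unique)
  also have "\<dots> = (LINT u:{0<..}|lborel. \<i> * (x u / of_real (s + u)))"
  proof (rule set_lebesgue_integral_cong; (intro allI impI)?)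
    fix u :: real assume "u \<in> {0<..}"
    then have nz: "complex_of_real (s + u) \<noteq> 0" using s by (simp only: of_real_eq_0_iff) auto
    have "x u / (- \<i> * of_real (s + u)) = x u * (inverse (- \<i>) * inverse (of_real (s + u)))"
      by (simp add: divide_inverse inverse_mult_distrib)
    also have "inverse (- \<i>) = \<i>" by simp
    finally show "x u / (- \<i> * of_real (s + u)) = \<i> * (x u / of_real (s + u))"
      by (simp add: divide_inverse)
  qed simp
  also have "\<dots> = \<i> * (LINT u:{0<..}|lborel. x u / of_real (s + u))"
    by (rule set_integral_mult_right)
  finally show ?thesis .
qed


lemma real_exp_integral_Ioi:
  fixes c :: real assumes c: "0 < c"
  shows "set_integrable lborel {0<..} (\<lambda>t. exp (- c * t))"
    and "(LINT t:{0<..}|lborel. exp (- c * t)) = 1 / c"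
proof -
  have d: "((\<lambda>t. - exp (- c * t) / c) has_real_derivative exp (- c * t)) (at t)" for t
    using c by (auto intro!: derivative_eq_intros)
  have l0: "(((\<lambda>t. - exp (- c * t) / c) \<circ> real_of_ereal) \<longlongrightarrow> - 1 / c) (at_right (ereal 0))"
    unfolding ereal_tendsto_simps1 using c by (auto intro!: tendsto_eq_intros)
  have l1: "(((\<lambda>t. - exp (- c * t) / c) \<circ> real_of_ereal) \<longlongrightarrow> 0) (at_left \<infinity>)"
    unfolding ereal_tendsto_simps1 using c by real_asymp
  have "set_integrable lborel (einterval (ereal 0) \<infinity>) (\<lambda>t. exp (- c * t))"
    "(LBINT t=ereal 0..\<infinity>. exp (- c * t)) = 0 - (- 1 / c)"
    by (rule interval_integral_FTC_nonneg[OF _ d _ _ l0 l1]; simp)+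
  then show "set_integrable lborel {0<..} (\<lambda>t. exp (- c * t))"
    "(LINT t:{0<..}|lborel. exp (- c * t)) = 1 / c"
    by (simp_all add: interval_integral_to_infinity_eq)
qed

lemma inv_sq_integrable:
  fixes w :: real
  shows "set_integrable lborel {0<..} (\<lambda>t. inverse (1 + (t - w)\<^sup>2))"
proof -
  have "integrable lborel (\<lambda>x::real. inverse (1 + x^2))"
    using integrable_inverse_1_plus_square by (simp add: set_integrable_def)
  then have "integrable lborel (\<lambda>x. inverse (1 + ((- w) + 1 * x)^2))"
    using lborel_integrable_real_affine_iff[where f="\<lambda>x::real. inverse (1 + x^2)" and c=1 and t="-w"] by simp
  then have "integrable lborel (\<lambda>x. inverse (1 + (x - w)^2))" by simp
  then show ?thesis unfolding set_integrable_def
    by (intro integrable_mult_indicator) auto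
qed

lemma lin_exp_bound: "0 \<le> (u::real) \<Longrightarrow> u * exp (- u) \<le> 2 * exp (- u / 2)"
proof -
  assume u: "0 \<le> u"
  have "u / 2 \<le> exp (u / 2)" using exp_ge_add_one_self[of "u/2"] by linarith
  then have "u \<le> 2 * exp (u / 2)" by simp
  then have "u * exp (- u) \<le> 2 * exp (u / 2) * exp (- u)" by (intro mult_right_mono) auto
  also have "\<dots> = 2 * exp (- u / 2)" by (simp add: mult.assoc exp_add[symmetric])
  finally show ?thesis .
qed

lemma sq_exp_bound: "0 \<le> (u::real) \<Longrightarrow> u\<^sup>2 * exp (- u) \<le> 16 * exp (- u / 2)"
proof -
  assume u: "0 \<le> u"
  have "u / 4 \<le> exp (u / 4)" using exp_ge_add_one_self[of "u/4"] by linarith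
  then have "(u / 4)\<^sup>2 \<le> (exp (u / 4))\<^sup>2" using u by (intro power_mono) auto
  also have "(exp (u / 4))\<^sup>2 = exp (u / 2)" by (simp add: power2_eq_square exp_add[symmetric])
  finally have "u\<^sup>2 \<le> 16 * exp (u / 2)" by (simp add: power_divide)
  then have "u\<^sup>2 * exp (- u) \<le> 16 * exp (u / 2) * exp (- u)" by (intro mult_right_mono) auto
  also have "\<dots> = 16 * exp (- u / 2)" by (simp add: mult.assoc exp_add[symmetric])
  finally show ?thesis .
qed


definition aa :: "real \<Rightarrow> complex" where "aa w = Complex 1 w"
definition xx :: "real \<Rightarrow> real \<Rightarrow> complex" where
  "xx w u = (2 * of_real u - aa w * (of_real u)\<^sup>2) * exp (- aa w * of_real u)"
definition HH :: "real \<Rightarrow> real \<Rightarrow> complex" where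
  "HH w t = - 2 * \<i> * of_real t / (aa w - \<i> * of_real t) ^ 3"

lemma xx_measurable[measurable]: "xx w \<in> borel_measurable lborel"
  unfolding xx_def by measurable

lemma HH_measurable[measurable]: "HH w \<in> borel_measurable lborel"
  unfolding HH_def by measurable

lemma cmod_aa: "0 \<le> w \<Longrightarrow> cmod (aa w) \<le> 1 + w"
  unfolding aa_def cmod_def
  by (rule real_le_lsqrt) (auto simp: power2_eq_square algebra_simps)

lemma norm_exp_aa: "norm (exp (- aa w * of_real u)) = exp (- u)"
  by (simp add: norm_exp_eq_Re aa_def)

lemma xx_bound:
  assumes w: "0 \<le> w" and u: "0 \<le> u"
  shows "norm (xx w u) \<le> 20 * (1 + w) * exp (- u / 2)"
proof -
  have "norm (2 * of_real u - aa w * (of_real u)\<^sup>2) \<le> norm (2 * (of_real u :: complex)) + norm (aa w * (of_real u)\<^sup>2)"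
    by (rule norm_triangle_ineq4)
  also have "\<dots> = 2 * u + cmod (aa w) * u\<^sup>2" using u by (simp add: norm_mult norm_power)
  also have "\<dots> \<le> (1 + w) * (2 * u) + (1 + w) * u\<^sup>2"
  proof (rule add_mono)
    show "2 * u \<le> (1 + w) * (2 * u)" using w u by (simp add: algebra_simps)
    show "cmod (aa w) * u\<^sup>2 \<le> (1 + w) * u\<^sup>2"
      using cmod_aa[OF w] by (intro mult_right_mono) auto
  qed
  finally have n1: "norm (2 * of_real u - aa w * (of_real u)\<^sup>2) \<le> (1 + w) * (2 * u + u\<^sup>2)"
    by (simp add: algebra_simps)
  have "norm (xx w u) = norm (2 * of_real u - aa w * (of_real u)\<^sup>2) * exp (- u)"
    unfolding xx_def norm_mult norm_exp_aa by simp
  also have "\<dots> \<le> (1 + w) * (2 * u + u\<^sup>2) * exp (- u)"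
    using n1 by (intro mult_right_mono) auto
  also have "\<dots> = (1 + w) * (2 * (u * exp (- u)) + u\<^sup>2 * exp (- u))" by (simp add: algebra_simps)
  also have "\<dots> \<le> (1 + w) * (2 * (2 * exp (- u / 2)) + 16 * exp (- u / 2))"
    using lin_exp_bound[OF u] sq_exp_bound[OF u] w by (intro mult_left_mono add_mono) auto
  also have "\<dots> = 20 * (1 + w) * exp (- u / 2)" by (simp add: algebra_simps)
  finally show ?thesis .
qed

lemma exp_half_integrable: "set_integrable lborel {0<..} (\<lambda>u::real. exp (- u / 2))"
  using real_exp_integral_Ioi(1)[of "1/2"] by simp

lemma xx_integrable:
  assumes w: "0 \<le> w"
  shows "set_integrable lborel {0<..} (xx w)"
proof (rule set_integrable_bound[where f = "\<lambda>u. 20 * (1 + w) * exp (- u / 2)"])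
  show "set_integrable lborel {0<..} (\<lambda>u. 20 * (1 + w) * exp (- u / 2))"
    using exp_half_integrable by (rule set_integrable_mult_right)
  show "set_borel_measurable lborel {0<..} (xx w)"
    unfolding set_borel_measurable_def by measurable
  show "AE x in lborel. x \<in> {0<..} \<longrightarrow> norm (xx w x) \<le> norm (20 * (1 + w) * exp (- x / 2))"
    using xx_bound[OF w] w by (auto intro!: AE_I2)
qed

lemma xx_sq_bound:
  assumes w: "0 \<le> w" and u: "0 \<le> u"
  shows "(cmod (xx w u))\<^sup>2 \<le> 400 * (1 + w)\<^sup>2 * exp (- u)"
proof -
  have "(cmod (xx w u))\<^sup>2 \<le> (20 * (1 + w) * exp (- u / 2))\<^sup>2"
    using xx_bound[OF w u] by (intro power_mono) auto
  also have "\<dots> = 400 * (1 + w)\<^sup>2 * (exp (- u / 2))\<^sup>2" by (simp add: power2_eq_square algebra_simps)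
  also have "(exp (- u / 2))\<^sup>2 = exp (- u)" by (simp add: power2_eq_square exp_add[symmetric])
  finally show ?thesis .
qed

lemma xx_sq_integrable:
  assumes w: "0 \<le> w"
  shows "set_integrable lborel {0<..} (\<lambda>u. (cmod (xx w u))\<^sup>2)"
proof (rule set_integrable_bound[where f = "\<lambda>u. 400 * (1 + w)\<^sup>2 * exp (- 1 * u)"])
  show "set_integrable lborel {0<..} (\<lambda>u. 400 * (1 + w)\<^sup>2 * exp (- 1 * u))"
    using real_exp_integral_Ioi(1)[of 1] by (intro set_integrable_mult_right) auto
  show "set_borel_measurable lborel {0<..} (\<lambda>u. (cmod (xx w u))\<^sup>2)"
    unfolding set_borel_measurable_def by measurable
  show "AE x in lborel. x \<in> {0<..} \<longrightarrow> norm ((cmod (xx w x))\<^sup>2) \<le> norm (400 * (1 + w)\<^sup>2 * exp (- 1 * x))"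
    using xx_sq_bound[OF w] w by (auto intro!: AE_I2)
qed

lemma xx_L2p: "0 \<le> w \<Longrightarrow> xx w \<in> L2p"
  unfolding L2p_def using xx_sq_integrable by auto

lemma xx_L2norm:
  assumes w: "0 \<le> w"
  shows "L2norm (xx w) \<le> 20 * (1 + w)"
proof -
  have "(LINT u:{0<..}|lborel. (cmod (xx w u))\<^sup>2) \<le> (LINT u:{0<..}|lborel. 400 * (1 + w)\<^sup>2 * exp (- 1 * u))"
  proof (rule set_integral_mono)
    show "set_integrable lborel {0<..} (\<lambda>u. 400 * (1 + w)\<^sup>2 * exp (- 1 * u))"
      using real_exp_integral_Ioi(1)[of 1] by (intro set_integrable_mult_right) auto
  qed (use xx_sq_integrable[OF w] xx_sq_bound[OF w] in auto)
  also have "\<dots> = 400 * (1 + w)\<^sup>2"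
    using real_exp_integral_Ioi(2)[of 1] by simp
  also have "\<dots> = (20 * (1 + w))\<^sup>2" by (simp add: power2_eq_square algebra_simps)
  finally have "sqrt (LINT u:{0<..}|lborel. (cmod (xx w u))\<^sup>2) \<le> sqrt ((20 * (1 + w))\<^sup>2)"
    by (rule real_sqrt_le_mono)
  then show ?thesis unfolding L2norm_def using w by simp
qed


lemma Re_aa: "Re (aa w) = 1" by (simp add: aa_def)

lemma xx_FT:
  assumes w: "0 \<le> w"
  shows "(LINT u:{0<..}|lborel. xx w u * exp (\<i> * of_real t * of_real u)) = HH w t"
proof -
  define a where "a = aa w"
  define c where "c = a - \<i> * of_real t"
  have Rec: "Re c = 1" unfolding c_def a_def by (simp add: Re_aa)
  have cnz: "c \<noteq> 0" using Rec by auto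
  define al where "al = a / c"
  define be where "be = 2 * (a - c) / c^2"
  define ga where "ga = 2 * (a - c) / c^3"
  define G0 where "G0 = (\<lambda>z. (al * z^2 + be * z + ga) * exp (- c * z))"
  have poly: "2 * al * z + be - c * (al * z^2 + be * z + ga) = 2 * z - a * z^2" for z
    unfolding al_def be_def ga_def using cnz
    by (simp add: field_simps power2_eq_square power3_eq_cube)
  have der: "(G0 has_field_derivative ((2 * z - a * z^2) * exp (- c * z))) (at z)" for z
  proof -
    have "(G0 has_field_derivative ((2 * al * z + be) * exp (- c * z) + (al * z^2 + be * z + ga) * (exp (- c * z) * (- c)))) (at z)"
      unfolding G0_def by (auto intro!: derivative_eq_intros simp: algebra_simps power2_eq_square)
    also have "(2 * al * z + be) * exp (- c * z) + (al * z^2 + be * z + ga) * (exp (- c * z) * (- c))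
        = (2 * al * z + be - c * (al * z^2 + be * z + ga)) * exp (- c * z)"
      by (simp add: algebra_simps)
    finally show ?thesis unfolding poly .
  qed
  have eqi: "xx w u * exp (\<i> * of_real t * of_real u) = (2 * of_real u - a * (of_real u)^2) * exp (- c * of_real u)" for u
  proof -
    have "exp (- a * of_real u) * exp (\<i> * of_real t * of_real u) = exp (- a * of_real u + \<i> * of_real t * of_real u)"
      by (simp add: mult_exp_exp)
    also have "- a * of_real u + \<i> * of_real t * of_real u = - c * of_real u"
      unfolding c_def by (simp add: algebra_simps)
    finally show ?thesis unfolding xx_def a_def[symmetric] by (simp add: mult.assoc)
  qed
  have nG: "norm (G0 (of_real u)) \<le> (cmod al * u^2 + cmod be * u + cmod ga) * exp (- u)" if u: "0 \<le> u" for u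
  proof -
    have "norm (G0 (of_real u)) = norm (al * (of_real u)^2 + be * of_real u + ga) * exp (- u)"
      unfolding G0_def norm_mult using Rec by (simp add: norm_exp_eq_Re)
    also have "\<dots> \<le> (cmod al * u^2 + cmod be * u + cmod ga) * exp (- u)"
    proof (rule mult_right_mono)
      have "norm (al * (of_real u)^2 + be * of_real u + ga) \<le> norm (al * (of_real u)^2) + norm (be * of_real u) + norm ga"
        by (rule order_trans[OF norm_triangle_ineq add_right_mono[OF norm_triangle_ineq]])
      also have "\<dots> = cmod al * u^2 + cmod be * u + cmod ga" using u by (simp add: norm_mult norm_power)
      finally show "norm (al * (of_real u)^2 + be * of_real u + ga) \<le> cmod al * u^2 + cmod be * u + cmod ga" .
    qed simp
    finally show ?thesis .
  qed
  have lim0: "((\<lambda>u. (cmod al * u^2 + cmod be * u + cmod ga) * exp (- u)) \<longlongrightarrow> 0) at_top"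
  proof -
    have l1: "((\<lambda>u::real. u^2 * exp (- u)) \<longlongrightarrow> 0) at_top" by real_asymp
    have l2: "((\<lambda>u::real. u * exp (- u)) \<longlongrightarrow> 0) at_top" by real_asymp
    have l3: "((\<lambda>u::real. exp (- u)) \<longlongrightarrow> 0) at_top" by real_asymp
    have "((\<lambda>u. cmod al * (u^2 * exp (- u)) + cmod be * (u * exp (- u)) + cmod ga * exp (- u)) \<longlongrightarrow>
        cmod al * 0 + cmod be * 0 + cmod ga * 0) at_top"
      by (intro tendsto_add tendsto_mult tendsto_const l1 l2 l3)
    then show ?thesis by (simp add: algebra_simps)
  qed
  have "(LINT u:{0<..}|lborel. xx w u * exp (\<i> * of_real t * of_real u)) = 0 - ga"
  proof (rule FTC_Ioi[where F = "\<lambda>u. G0 (of_real u)"])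
    show "((\<lambda>u. G0 (of_real u)) has_vector_derivative xx w x * exp (\<i> * of_real t * of_real x)) (at x)" for x
      unfolding eqi by (rule has_vector_derivative_real_field[OF der])
    show "isCont (\<lambda>x. xx w x * exp (\<i> * of_real t * of_real x)) x" for x
      unfolding xx_def by (intro continuous_intros)
    show "set_integrable lborel {0<..} (\<lambda>x. xx w x * exp (\<i> * of_real t * of_real x))"
    proof (rule set_integrable_bound[OF xx_integrable[OF w]])
      show "set_borel_measurable lborel {0<..} (\<lambda>x. xx w x * exp (\<i> * of_real t * of_real x))"
        unfolding set_borel_measurable_def by measurable
    qed (auto simp: norm_mult)
    show "((\<lambda>u. G0 (of_real u)) \<longlongrightarrow> ga) (at_right 0)"
    proof -
      have "((\<lambda>u. G0 (of_real u)) \<longlongrightarrow> G0 (of_real 0)) (at_right 0)"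
        unfolding G0_def by (intro tendsto_intros)
      then show ?thesis by (simp add: G0_def)
    qed
    show "((\<lambda>u. G0 (of_real u)) \<longlongrightarrow> 0) at_top"
      by (rule Lim_null_comparison[OF _ lim0]) (auto simp: eventually_at_top_linorder intro!: exI[of _ 0] nG)
  qed
  also have "0 - ga = HH w t"
    unfolding ga_def HH_def c_def a_def by (simp add: field_simps)
  finally show ?thesis .
qed


definition c0 :: complex where "c0 = complex_of_real (1 / sqrt (2 * pi))"
definition hh :: "real \<Rightarrow> real \<Rightarrow> complex" where "hh w t = c0 * HH w t"

lemma hh_measurable[measurable]: "hh w \<in> borel_measurable lborel"
  unfolding hh_def by measurable

lemma cmod_c0: "cmod c0 = 1 / sqrt (2 * pi)"
  unfolding c0_def by (simp only: norm_of_real) simp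

lemma cmod_c0_sq: "(cmod c0)\<^sup>2 = 1 / (2 * pi)"
  unfolding cmod_c0 by (simp add: power_divide)

lemma cmod_cc: "cmod (aa w - \<i> * of_real t) = sqrt (1 + (t - w)\<^sup>2)"
proof -
  have "aa w - \<i> * of_real t = Complex 1 (w - t)" by (simp add: aa_def complex_eq_iff)
  then show ?thesis by (simp add: cmod_def power2_commute)
qed

lemma HH_norm: "cmod (HH w t) = 2 * \<bar>t\<bar> / (sqrt (1 + (t - w)\<^sup>2)) ^ 3"
  unfolding HH_def by (simp add: norm_divide norm_mult norm_power cmod_cc)

lemma HH_upper:
  assumes w: "0 \<le> w" and t: "0 < t"
  shows "cmod (HH w t) \<le> 2 * (1 + w) * inverse (1 + (t - w)\<^sup>2)"
proof -
  define N where "N = sqrt (1 + (t - w)\<^sup>2)"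
  have N1: "1 \<le> N" unfolding N_def by simp
  have N2: "\<bar>t - w\<bar> \<le> N" unfolding N_def by (rule real_le_rsqrt) simp
  have NN: "N\<^sup>2 = 1 + (t - w)\<^sup>2" unfolding N_def by simp
  have tN: "t \<le> (1 + w) * N"
  proof -
    have "t \<le> \<bar>t - w\<bar> + w" by simp
    also have "\<dots> \<le> N + w * N" using N2 mult_left_mono[OF N1 w] by (intro add_mono) auto
    finally show ?thesis by (simp add: algebra_simps)
  qed
  have "cmod (HH w t) = 2 * t / N ^ 3" unfolding HH_norm N_def using t by simp
  also have "\<dots> \<le> 2 * ((1 + w) * N) / N ^ 3" using tN N1 by (intro divide_right_mono) auto
  also have "\<dots> = 2 * (1 + w) / N\<^sup>2" using N1 by (simp add: power2_eq_square power3_eq_cube)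
  also have "\<dots> = 2 * (1 + w) * inverse (1 + (t - w)\<^sup>2)" unfolding NN by (simp add: divide_inverse)
  finally show ?thesis .
qed

lemma HH_lower:
  assumes w: "0 \<le> w" and t: "w \<le> t" "t \<le> w + 1"
  shows "w\<^sup>2 / 2 \<le> (cmod (HH w t))\<^sup>2"
proof -
  define N where "N = sqrt (1 + (t - w)\<^sup>2)"
  have "(t - w)\<^sup>2 \<le> 1" using t by (simp add: abs_le_square_iff[symmetric] power2_eq_square, smt (verit) mult_le_one)
  then have N2: "N\<^sup>2 \<le> 2" unfolding N_def by simp
  have N0: "0 \<le> N" unfolding N_def by simp
  have N6: "(N ^ 3)\<^sup>2 \<le> 8"
  proof -
    have "(N ^ 3)\<^sup>2 = (N\<^sup>2) ^ 3" by (simp add: power_mult[symmetric] mult.commute)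
    also have "\<dots> \<le> 2 ^ 3" using N2 N0 by (intro power_mono) auto
    finally show ?thesis by simp
  qed
  have p: "0 < 1 + (t - w)\<^sup>2" by (metis add_pos_nonneg zero_less_one zero_le_power2)
  have Npos: "0 < N" unfolding N_def using p by simp
  have "(cmod (HH w t))\<^sup>2 = 4 * t\<^sup>2 / (N ^ 3)\<^sup>2" unfolding HH_norm N_def[symmetric]
    by (simp add: power_divide power_mult_distrib)
  also have "\<dots> \<ge> 4 * w\<^sup>2 / 8"
  proof (rule frac_le)
    show "4 * w\<^sup>2 \<le> 4 * t\<^sup>2" using w t by (intro mult_left_mono power_mono) auto
  qed (use N6 Npos in auto)
  finally show ?thesis by simp
qed

lemma hh_bound:
  assumes w: "0 \<le> w" and t: "0 < t"
  shows "cmod (hh w t) \<le> (1 / sqrt (2 * pi)) * (2 * (1 + w)) * inverse (1 + (t - w)\<^sup>2)"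
proof -
  have "(1 / sqrt (2 * pi)) * cmod (HH w t) \<le> (1 / sqrt (2 * pi)) * (2 * (1 + w) * inverse (1 + (t - w)\<^sup>2))"
    using HH_upper[OF w t] by (rule mult_left_mono) simp
  then show ?thesis unfolding hh_def norm_mult cmod_c0 by (simp only: mult.assoc)
qed

lemma hh_integrable:
  assumes w: "0 \<le> w"
  shows "set_integrable lborel {0<..} (hh w)"
proof (rule set_integrable_bound[where f = "\<lambda>t. ((1 / sqrt (2 * pi)) * (2 * (1 + w))) * inverse (1 + (t - w)\<^sup>2)"])
  show "set_integrable lborel {0<..} (\<lambda>t. ((1 / sqrt (2 * pi)) * (2 * (1 + w))) * inverse (1 + (t - w)\<^sup>2))"
    using inv_sq_integrable[of w] by (rule set_integrable_mult_right)
  show "set_borel_measurable lborel {0<..} (hh w)"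
    unfolding set_borel_measurable_def by measurable
  show "AE x in lborel. x \<in> {0<..} \<longrightarrow> norm (hh w x) \<le> norm ((1 / sqrt (2 * pi)) * (2 * (1 + w)) * inverse (1 + (x - w)\<^sup>2))"
    using hh_bound[OF w] w by (intro AE_I2) (auto simp: abs_mult)
qed

lemma hh_sq_integrable:
  assumes w: "0 \<le> w"
  shows "set_integrable lborel {0<..} (\<lambda>t. (cmod (hh w t))\<^sup>2)"
proof (rule set_integrable_bound[where f = "\<lambda>t. ((1 / sqrt (2 * pi)) * (2 * (1 + w)))\<^sup>2 * inverse (1 + (t - w)\<^sup>2)"])
  show "set_integrable lborel {0<..} (\<lambda>t. ((1 / sqrt (2 * pi)) * (2 * (1 + w)))\<^sup>2 * inverse (1 + (t - w)\<^sup>2))"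
    using inv_sq_integrable[of w] by (rule set_integrable_mult_right)
  show "set_borel_measurable lborel {0<..} (\<lambda>t. (cmod (hh w t))\<^sup>2)"
    unfolding set_borel_measurable_def by measurable
  show "AE x in lborel. x \<in> {0<..} \<longrightarrow> norm ((cmod (hh w x))\<^sup>2) \<le> norm (((1 / sqrt (2 * pi)) * (2 * (1 + w)))\<^sup>2 * inverse (1 + (x - w)\<^sup>2))"
  proof (intro AE_I2 impI)
    fix x :: real assume "x \<in> {0<..}"
    then have x: "0 < x" by simp
    define q where "q = inverse (1 + (x - w)\<^sup>2)"
    have q0: "0 \<le> q" "q \<le> 1" unfolding q_def by (auto simp: inverse_le_1_iff)
    have "(cmod (hh w x))\<^sup>2 \<le> ((1 / sqrt (2 * pi)) * (2 * (1 + w)) * q)\<^sup>2"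
      using hh_bound[OF w x] unfolding q_def by (intro power_mono) auto
    also have "\<dots> = ((1 / sqrt (2 * pi)) * (2 * (1 + w)))\<^sup>2 * (q * q)" by (simp add: power2_eq_square)
    also have "\<dots> \<le> ((1 / sqrt (2 * pi)) * (2 * (1 + w)))\<^sup>2 * q"
      using q0 mult_left_mono[OF q0(2) q0(1)] by (intro mult_left_mono) auto
    finally show "norm ((cmod (hh w x))\<^sup>2) \<le> norm (((1 / sqrt (2 * pi)) * (2 * (1 + w)))\<^sup>2 * inverse (1 + (x - w)\<^sup>2))"
      using q0 unfolding q_def by simp
  qed
qed

lemma hh_L2p: "0 \<le> w \<Longrightarrow> hh w \<in> L2p"
  unfolding L2p_def using hh_sq_integrable by auto

lemma hh_L2norm_lower:
  assumes w: "1 \<le> w"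
  shows "w\<^sup>2 / (4 * pi) \<le> (L2norm (hh w))\<^sup>2"
proof -
  have w0: "0 \<le> w" using w by simp
  have I: "integrable lborel (indicator {w..w+1} :: real \<Rightarrow> real)" by simp
  have eqc: "(LINT t:{0<..}|lborel. indicator {w..w+1} t * (w\<^sup>2 / (4 * pi))) = (w\<^sup>2 / (4 * pi))"
  proof -
    have "(LINT t:{0<..}|lborel. indicator {w..w+1} t * (w\<^sup>2 / (4 * pi)))
        = (\<integral>t. indicator {w..w+1} t * (w\<^sup>2 / (4 * pi)) \<partial>lborel)"
      unfolding set_lebesgue_integral_def using w
      by (intro Bochner_Integration.integral_cong) (auto split: split_indicator)
    also have "\<dots> = (w\<^sup>2 / (4 * pi))" by simp
    finally show ?thesis .
  qed
  also have "\<dots> \<le> (LINT t:{0<..}|lborel. (cmod (hh w t))\<^sup>2)"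
  proof -
    have "(LINT t:{0<..}|lborel. indicator {w..w+1} t * (w\<^sup>2 / (4 * pi))) \<le> (LINT t:{0<..}|lborel. (cmod (hh w t))\<^sup>2)"
    proof (rule set_integral_mono)
      show "set_integrable lborel {0<..} (\<lambda>t. indicator {w..w+1} t * (w\<^sup>2 / (4 * pi)))"
        unfolding set_integrable_def using I by (intro integrable_mult_indicator) auto
      show "set_integrable lborel {0<..} (\<lambda>t. (cmod (hh w t))\<^sup>2)" by (rule hh_sq_integrable[OF w0])
      fix t :: real assume "t \<in> {0<..}"
      show "indicator {w..w+1} t * (w\<^sup>2 / (4 * pi)) \<le> (cmod (hh w t))\<^sup>2"
      proof (cases "t \<in> {w..w+1}")
        case True
        have "w\<^sup>2 / (4 * pi) = (w\<^sup>2 / 2) * (1 / (2 * pi))" by simp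
        also have "\<dots> \<le> (cmod (HH w t))\<^sup>2 * (1 / (2 * pi))"
          using HH_lower[OF w0] True by (intro mult_right_mono) auto
        also have "\<dots> = (cmod (hh w t))\<^sup>2" unfolding hh_def norm_mult power_mult_distrib cmod_c0_sq by simp
        finally show ?thesis using True by simp
      qed simp
    qed
    then show ?thesis using eqc by linarith
  qed
  also have "\<dots> = (L2norm (hh w))\<^sup>2"
  proof -
    have "0 \<le> (LINT t:{0<..}|lborel. (cmod (hh w t))\<^sup>2)"
      unfolding set_lebesgue_integral_def by (simp add: Bochner_Integration.integral_nonneg_AE)
    then show ?thesis unfolding L2norm_def by simp
  qed
  finally show ?thesis using eqc by linarith
qed


definition psi :: "real \<Rightarrow> real \<Rightarrow> complex" where
  "psi w u = (of_real u)\<^sup>2 * exp (- aa w * of_real u)"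

lemma psi_measurable[measurable]: "psi w \<in> borel_measurable lborel"
  unfolding psi_def by measurable

lemma norm_psi: "norm (psi w u) = u\<^sup>2 * exp (- u)"
  unfolding psi_def norm_mult norm_exp_aa by (simp add: norm_power)

lemma psi_div_bound1:
  assumes s: "0 < s" and u: "0 < u"
  shows "norm (psi w u / (of_real (s + u))\<^sup>2) \<le> exp (- 1 * u)"
proof -
  have "norm (psi w u / (of_real (s + u))\<^sup>2) = u\<^sup>2 * exp (- u) / (s + u)\<^sup>2"
    using s u by (simp del: of_real_add add: norm_divide norm_psi norm_power)
  also have "\<dots> \<le> (s + u)\<^sup>2 * exp (- u) / (s + u)\<^sup>2"
    using s u by (intro divide_right_mono mult_right_mono power_mono) auto
  also have "\<dots> = exp (- 1 * u)" using s u by simp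
  finally show ?thesis .
qed

lemma psi_div_bound2:
  assumes s: "0 < s" and u: "0 < u"
  shows "norm (psi w u / (of_real (s + u))\<^sup>2) \<le> (16 / s\<^sup>2) * exp (- (1/2) * u)"
proof -
  have "norm (psi w u / (of_real (s + u))\<^sup>2) = u\<^sup>2 * exp (- u) / (s + u)\<^sup>2"
    using s u by (simp del: of_real_add add: norm_divide norm_psi norm_power)
  also have "\<dots> \<le> (16 * exp (- u / 2)) / s\<^sup>2"
    using s u sq_exp_bound[of u] by (intro frac_le power_mono) auto
  also have "\<dots> = (16 / s\<^sup>2) * exp (- (1/2) * u)" by simp
  finally show ?thesis .
qed

lemma psi_div_integrable:
  assumes s: "0 < s"
  shows "set_integrable lborel {0<..} (\<lambda>u. psi w u / (of_real (s + u))\<^sup>2)"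
proof (rule set_integrable_bound[where f = "\<lambda>u. exp (- 1 * u)"])
  show "set_integrable lborel {0<..} (\<lambda>u::real. exp (- 1 * u))" using real_exp_integral_Ioi(1)[of 1] by simp
  show "set_borel_measurable lborel {0<..} (\<lambda>u. psi w u / (of_real (s + u))\<^sup>2)"
    unfolding set_borel_measurable_def by measurable
  show "AE u in lborel. u \<in> {0<..} \<longrightarrow> norm (psi w u / (of_real (s + u))\<^sup>2) \<le> norm (exp (- 1 * u))"
    using psi_div_bound1[OF s] by (intro AE_I2) auto
qed

lemma xx_div_integrable:
  assumes s: "0 < s" and w: "0 \<le> w"
  shows "set_integrable lborel {0<..} (\<lambda>u. xx w u / of_real (s + u))"
proof (rule set_integrable_bound[where f = "\<lambda>u. of_real (1 / s) * xx w u"])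
  show "set_integrable lborel {0<..} (\<lambda>u. of_real (1 / s) * xx w u)"
    using xx_integrable[OF w] by (rule set_integrable_mult_right)
  show "set_borel_measurable lborel {0<..} (\<lambda>u. xx w u / of_real (s + u))"
    unfolding set_borel_measurable_def by measurable
  show "AE u in lborel. u \<in> {0<..} \<longrightarrow> norm (xx w u / of_real (s + u)) \<le> norm (of_real (1 / s) * xx w u)"
  proof (intro AE_I2 impI)
    fix u :: real assume "u \<in> {0<..}"
    then have u: "0 < u" by simp
    have "norm (xx w u / of_real (s + u)) = norm (xx w u) / (s + u)" using s u by (simp del: of_real_add add: norm_divide)
    also have "\<dots> \<le> norm (xx w u) / s" using s u by (intro divide_left_mono) auto
    finally show "norm (xx w u / of_real (s + u)) \<le> norm (of_real (1 / s) * xx w u)" using s by (simp add: norm_mult norm_divide del: of_real_add)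
  qed
qed

lemma alg: fixes d z E a :: complex assumes "d \<noteq> 0"
  shows "((2 * z * E + z^2 * (E * (- a))) * d - z^2 * E * 1) / d^2 = (2 * z - a * z^2) * E / d - z^2 * E / d^2"
  using assms by (simp add: field_simps power2_eq_square)

lemma ibp:
  assumes s: "0 < s" and w: "0 \<le> w"
  shows "(LINT u:{0<..}|lborel. xx w u / of_real (s + u)) = (LINT u:{0<..}|lborel. psi w u / (of_real (s + u))\<^sup>2)"
proof -
  define a where "a = aa w"
  define P0 where "P0 = (\<lambda>z. z^2 * exp (- a * z) / (of_real s + z))"
  have der: "(P0 has_field_derivative (xx w u / of_real (s + u) - psi w u / (of_real (s + u))\<^sup>2)) (at (of_real u))"
    if u: "0 < u" for u
  proof -
    have nz: "of_real s + of_real u \<noteq> (0::complex)"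
      using s u by (metis add_pos_pos of_real_add of_real_eq_0_iff order_less_irrefl)
    have "(P0 has_field_derivative
        (((2 * of_real u * exp (- a * of_real u) + (of_real u)^2 * (exp (- a * of_real u) * (- a))) * (of_real s + of_real u)
           - (of_real u)^2 * exp (- a * of_real u) * 1) / (of_real s + of_real u)^2)) (at (of_real u))"
      unfolding P0_def using nz
      by (auto intro!: derivative_eq_intros simp: power2_eq_square algebra_simps)
    also have "(((2 * of_real u * exp (- a * of_real u) + (of_real u)^2 * (exp (- a * of_real u) * (- a))) * (of_real s + of_real u)
           - (of_real u)^2 * exp (- a * of_real u) * 1) / (of_real s + of_real u)^2)
        = xx w u / of_real (s + u) - psi w u / (of_real (s + u))\<^sup>2"
      using alg[OF nz, where z="of_real u" and E="exp (- a * of_real u)" and a=a]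
      unfolding xx_def psi_def a_def[symmetric] of_real_add by simp
    finally show ?thesis .
  qed
  have int1: "set_integrable lborel {0<..} (\<lambda>u. xx w u / of_real (s + u))" by (rule xx_div_integrable[OF s w])
  have int2: "set_integrable lborel {0<..} (\<lambda>u. psi w u / (of_real (s + u))\<^sup>2)" by (rule psi_div_integrable[OF s])
  have "(LINT u:{0<..}|lborel. xx w u / of_real (s + u) - psi w u / (of_real (s + u))\<^sup>2) = 0 - 0"
  proof (rule FTC_Ioi[where F = "\<lambda>u. P0 (of_real u)"])
    show "((\<lambda>u. P0 (of_real u)) has_vector_derivative xx w x / of_real (s + x) - psi w x / (of_real (s + x))\<^sup>2) (at x)"
      if "0 < x" for x
      by (rule has_vector_derivative_real_field[OF der[OF that]])
    show "isCont (\<lambda>x. xx w x / of_real (s + x) - psi w x / (of_real (s + x))\<^sup>2) x" if x: "0 < x" for x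
    proof -
      have nz: "complex_of_real (s + x) \<noteq> 0" using s x by (simp only: of_real_eq_0_iff)
      show ?thesis unfolding xx_def psi_def using nz by (intro continuous_intros) (simp_all del: of_real_add)
    qed
    show "set_integrable lborel {0<..} (\<lambda>x. xx w x / of_real (s + x) - psi w x / (of_real (s + x))\<^sup>2)"
      using int1 int2 by (rule set_integral_diff(1))
    show "((\<lambda>u. P0 (of_real u)) \<longlongrightarrow> 0) (at_right 0)"
    proof -
      have nz: "of_real s + of_real 0 \<noteq> (0::complex)" using s by simp
      have "((\<lambda>u. P0 (of_real u)) \<longlongrightarrow> P0 (of_real 0)) (at_right 0)"
        unfolding P0_def using nz by (intro tendsto_intros) auto
      then show ?thesis by (simp add: P0_def)
    qed
    show "((\<lambda>u. P0 (of_real u)) \<longlongrightarrow> 0) at_top"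
    proof (rule Lim_null_comparison)
      show "((\<lambda>u::real. u\<^sup>2 * exp (- u) / s) \<longlongrightarrow> 0) at_top"
      proof -
        have "((\<lambda>u::real. u\<^sup>2 * exp (- u)) \<longlongrightarrow> 0) at_top" by real_asymp
        then show ?thesis by (rule tendsto_divide_zero)
      qed
      show "\<forall>\<^sub>F u in at_top. norm (P0 (of_real u)) \<le> u\<^sup>2 * exp (- u) / s"
        unfolding eventually_at_top_linorder
      proof (intro exI[of _ 1] allI impI)
        fix u :: real assume "1 \<le> u"
        then have u: "0 < u" by simp
        have "norm (P0 (of_real u)) = u\<^sup>2 * exp (- u) / (s + u)"
          unfolding P0_def a_def using s u
          by (simp add: norm_divide norm_mult norm_power norm_exp_aa Re_aa flip: of_real_add)
        also have "\<dots> \<le> u\<^sup>2 * exp (- u) / s" using s u by (intro divide_left_mono) auto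
        finally show "norm (P0 (of_real u)) \<le> u\<^sup>2 * exp (- u) / s" .
      qed
    qed
  qed
  then have "(LINT u:{0<..}|lborel. xx w u / of_real (s + u)) - (LINT u:{0<..}|lborel. psi w u / (of_real (s + u))\<^sup>2) = 0"
    using set_integral_diff(2)[OF int1 int2] by simp
  then show ?thesis by simp
qed

lemma psi_int_bound:
  assumes s: "0 < s"
  shows "cmod (LINT u:{0<..}|lborel. psi w u / (of_real (s + u))\<^sup>2) \<le> 33 * inverse (1 + s\<^sup>2)"
proof -
  have int2: "set_integrable lborel {0<..} (\<lambda>u. psi w u / (of_real (s + u))\<^sup>2)" by (rule psi_div_integrable[OF s])
  have intn: "set_integrable lborel {0<..} (\<lambda>u. norm (psi w u / (of_real (s + u))\<^sup>2))"
  proof -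
    have "integrable lborel (\<lambda>u. norm (indicator {0<..} u *\<^sub>R (psi w u / (of_real (s + u))\<^sup>2)))"
      using int2 unfolding set_integrable_def by (rule integrable_norm)
    then show ?thesis unfolding set_integrable_def by (simp add: abs_mult)
  qed
  have nb: "cmod (LINT u:{0<..}|lborel. psi w u / (of_real (s + u))\<^sup>2) \<le> (LINT u:{0<..}|lborel. norm (psi w u / (of_real (s + u))\<^sup>2))"
    by (rule set_integral_norm_bound[OF int2])
  have b1: "(LINT u:{0<..}|lborel. norm (psi w u / (of_real (s + u))\<^sup>2)) \<le> 1"
  proof -
    have "(LINT u:{0<..}|lborel. norm (psi w u / (of_real (s + u))\<^sup>2)) \<le> (LINT u:{0<..}|lborel. exp (- 1 * u))"
      using intn real_exp_integral_Ioi(1)[of 1] psi_div_bound1[OF s] by (intro set_integral_mono) auto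
    also have "\<dots> = 1" using real_exp_integral_Ioi(2)[of 1] by simp
    finally show ?thesis .
  qed
  have b2: "(LINT u:{0<..}|lborel. norm (psi w u / (of_real (s + u))\<^sup>2)) \<le> 32 / s\<^sup>2"
  proof -
    have "(LINT u:{0<..}|lborel. norm (psi w u / (of_real (s + u))\<^sup>2)) \<le> (LINT u:{0<..}|lborel. (16 / s\<^sup>2) * exp (- (1/2) * u))"
      using intn real_exp_integral_Ioi(1)[of "1/2"] psi_div_bound2[OF s] by (intro set_integral_mono) auto
    also have "\<dots> = (16 / s\<^sup>2) * 2" using real_exp_integral_Ioi(2)[of "1/2"] by simp
    finally show ?thesis by simp
  qed
  have "min 1 (32 / s\<^sup>2) \<le> 33 * inverse (1 + s\<^sup>2)"
  proof (cases "s\<^sup>2 \<le> 32")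
    case True
    then have "1 \<le> 33 * inverse (1 + s\<^sup>2)" by (simp add: le_divide_eq add_pos_nonneg divide_inverse[symmetric])
    then show ?thesis by simp
  next
    case False
    then have "32 / s\<^sup>2 \<le> 33 * inverse (1 + s\<^sup>2)" using s by (simp add: field_simps)
    then show ?thesis by simp
  qed
  then show ?thesis using nb b1 b2 by linarith
qed


lemma Th_pointwise:
  assumes w: "0 \<le> w" and s: "0 < s"
  shows "cmod (c0 * (LINT t:{0<..}|lborel. hh w t * exp (\<i> * of_real s * of_real t))) \<le> 6 * inverse (1 + s\<^sup>2)"
proof -
  have st: "(LINT t:{0<..}|lborel. hh w t * exp (\<i> * of_real s * of_real t))
      = \<i> * (LINT u:{0<..}|lborel. (c0 * xx w u) / of_real (s + u))"
  proof (rule stieltjes)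
    show "(\<lambda>u. c0 * xx w u) \<in> borel_measurable lborel" by measurable
    show "set_integrable lborel {0<..} (\<lambda>u. c0 * xx w u)"
      using xx_integrable[OF w] by (rule set_integrable_mult_right)
    show "hh w \<in> borel_measurable lborel" by measurable
    show "set_integrable lborel {0<..} (hh w)" by (rule hh_integrable[OF w])
    show "hh w t = (LINT u:{0<..}|lborel. c0 * xx w u * exp (\<i> * of_real t * of_real u))" for t
    proof -
      have "(LINT u:{0<..}|lborel. c0 * xx w u * exp (\<i> * of_real t * of_real u))
          = (LINT u:{0<..}|lborel. c0 * (xx w u * exp (\<i> * of_real t * of_real u)))"
        by (simp only: mult.assoc)
      also have "\<dots> = c0 * (LINT u:{0<..}|lborel. xx w u * exp (\<i> * of_real t * of_real u))"
        by (rule set_integral_mult_right)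
      also have "\<dots> = hh w t" unfolding xx_FT[OF w] hh_def ..
      finally show ?thesis by simp
    qed
  qed (rule s)
  have e2: "(LINT u:{0<..}|lborel. (c0 * xx w u) / of_real (s + u)) = c0 * (LINT u:{0<..}|lborel. xx w u / of_real (s + u))"
  proof -
    have "(LINT u:{0<..}|lborel. (c0 * xx w u) / of_real (s + u)) = (LINT u:{0<..}|lborel. c0 * (xx w u / of_real (s + u)))"
      by (simp only: times_divide_eq_right)
    also have "\<dots> = c0 * (LINT u:{0<..}|lborel. xx w u / of_real (s + u))"
      by (rule set_integral_mult_right)
    finally show ?thesis .
  qed
  define I where "I = (LINT u:{0<..}|lborel. psi w u / (of_real (s + u))\<^sup>2)"
  have "c0 * (LINT t:{0<..}|lborel. hh w t * exp (\<i> * of_real s * of_real t)) = c0 * (\<i> * (c0 * I))"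
    unfolding st e2 ibp[OF s w] I_def ..
  then have "cmod (c0 * (LINT t:{0<..}|lborel. hh w t * exp (\<i> * of_real s * of_real t))) = cmod (c0 * (\<i> * (c0 * I)))"
    by (rule arg_cong)
  also have "\<dots> = (cmod c0)\<^sup>2 * cmod I"
    by (simp only: norm_mult power2_eq_square) simp
  also have "\<dots> \<le> (1 / (2 * pi)) * (33 * inverse (1 + s\<^sup>2))"
    unfolding cmod_c0_sq I_def by (intro mult_left_mono psi_int_bound[OF s]) auto
  also have "\<dots> \<le> 6 * inverse (1 + s\<^sup>2)"
  proof -
    have "1 / (2 * pi) * 33 \<le> 6" using pi_gt3 by (simp add: field_simps)
    moreover have "0 \<le> inverse (1 + s\<^sup>2)" by simp
    ultimately show ?thesis by (metis mult.assoc mult_right_mono)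
  qed
  finally show ?thesis .
qed


theorem corollary4p9:
  fixes T :: "(real \<Rightarrow> complex) \<Rightarrow> (real \<Rightarrow> complex)"
    and H :: "'h cH"
  assumes "is_trunc_FP T"
    and "complex_hilbert_space H"
  shows "\<not> (\<exists>S Sinv N.
             bdd_op_L2_H H S \<and> bdd_op_H_L2 H Sinv \<and>
             (\<forall>x. S (Sinv x) = x) \<and> (\<forall>f\<in>L2p. aeq (Sinv (S f)) f) \<and>
             normal_op H N \<and>
             (\<forall>f\<in>L2p. aeq (T f) (Sinv (N (S f)))))"
proof
  assume "\<exists>S Sinv N.
             bdd_op_L2_H H S \<and> bdd_op_H_L2 H Sinv \<and>
             (\<forall>x. S (Sinv x) = x) \<and> (\<forall>f\<in>L2p. aeq (Sinv (S f)) f) \<and>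
             normal_op H N \<and>
             (\<forall>f\<in>L2p. aeq (T f) (Sinv (N (S f))))"
  then obtain S Sinv N where S: "bdd_op_L2_H H S" and Si: "bdd_op_H_L2 H Sinv"
    and inv1: "\<forall>x. S (Sinv x) = x" and N: "normal_op H N"
    and sim: "\<forall>f\<in>L2p. aeq (T f) (Sinv (N (S f)))" by blast
  have BT: "bdd_op_L2 T" using assms(1) unfolding is_trunc_FP_def by blast
  have FT: "\<forall>f\<in>L2p. set_integrable lborel {0<..} f \<longrightarrow>
        (AE t in lborel. 0 < t \<longrightarrow>
           T f t = c0 * (LINT \<xi>:{0<..}|lborel. f \<xi> * exp (\<i> * complex_of_real t * complex_of_real \<xi>)))"
    using assms(1) unfolding is_trunc_FP_def c0_def by blast
  have TL: "\<forall>f\<in>L2p. T f \<in> L2p" using BT unfolding bdd_op_L2_def by blast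
  have Taeq: "\<forall>f\<in>L2p. \<forall>g\<in>L2p. aeq f g \<longrightarrow> aeq (T f) (T g)" using BT unfolding bdd_op_L2_def by blast
  obtain K where K: "\<forall>f\<in>L2p. (L2norm (T f))\<^sup>2 \<le> K * L2norm (T (T f)) * L2norm f"
    using abstract_part[OF assms(2) BT S Si inv1 N sim] by blast
  define D0 where "D0 = (LINT s:{0<..}|lborel. 36 * inverse (1 + s\<^sup>2) :: real)"
  define M where "M = \<bar>K\<bar> * sqrt D0"
  have D00: "0 \<le> D0" unfolding D0_def set_lebesgue_integral_def
    by (intro Bochner_Integration.integral_nonneg_AE AE_I2) (simp add: add_pos_nonneg)
  have M0: "0 \<le> M" unfolding M_def using D00 by simp
  define w where "w = 160 * pi * M + 1"
  have w1: "1 \<le> w" unfolding w_def using M0 by simp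
  have w0: "0 \<le> w" using w1 by simp
  have xL: "xx w \<in> L2p" by (rule xx_L2p[OF w0])
  have hL: "hh w \<in> L2p" by (rule hh_L2p[OF w0])
  have TxL: "T (xx w) \<in> L2p" using TL xL by blast
  have ThL: "T (hh w) \<in> L2p" using TL hL by blast
  have TTxL: "T (T (xx w)) \<in> L2p" using TL TxL by blast
  have a1: "aeq (T (xx w)) (hh w)"
  proof -
    have "AE t in lborel. 0 < t \<longrightarrow> T (xx w) t = c0 * (LINT \<xi>:{0<..}|lborel. xx w \<xi> * exp (\<i> * complex_of_real t * complex_of_real \<xi>))"
      using FT xL xx_integrable[OF w0] by blast
    then show ?thesis unfolding aeq_def
      by (rule eventually_mono) (simp add: xx_FT[OF w0] hh_def)
  qed
  have n1: "L2norm (T (xx w)) = L2norm (hh w)" by (rule L2norm_aeq[OF TxL hL a1])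
  have a2: "aeq (T (T (xx w))) (T (hh w))" using Taeq TxL hL a1 by blast
  have n2: "L2norm (T (T (xx w))) = L2norm (T (hh w))" by (rule L2norm_aeq[OF TTxL ThL a2])
  have a3: "AE s in lborel. 0 < s \<longrightarrow> T (hh w) s = c0 * (LINT t:{0<..}|lborel. hh w t * exp (\<i> * complex_of_real s * complex_of_real t))"
    using FT hL hh_integrable[OF w0] by blast
  have b: "L2norm (T (hh w)) \<le> sqrt D0"
  proof -
    have inti: "set_integrable lborel {0<..} (\<lambda>s::real. 36 * inverse (1 + s\<^sup>2))"
      using inv_sq_integrable[of 0] by (intro set_integrable_mult_right) simp
    have "(LINT s:{0<..}|lborel. (cmod (T (hh w) s))\<^sup>2) \<le> D0"
      unfolding D0_def
    proof (rule set_integral_mono_AE)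
      show "set_integrable lborel {0<..} (\<lambda>s. (cmod (T (hh w) s))\<^sup>2)" using ThL unfolding L2p_def by blast
      show "set_integrable lborel {0<..} (\<lambda>s::real. 36 * inverse (1 + s\<^sup>2))" by (rule inti)
      show "AE s\<in>{0<..} in lborel. (cmod (T (hh w) s))\<^sup>2 \<le> 36 * inverse (1 + s\<^sup>2)"
        using a3
      proof (rule eventually_mono, intro impI)
        fix s :: real
        assume h: "0 < s \<longrightarrow> T (hh w) s = c0 * (LINT t:{0<..}|lborel. hh w t * exp (\<i> * complex_of_real s * complex_of_real t))"
          and "s \<in> {0<..}"
        then have s: "0 < s" by simp
        define q where "q = inverse (1 + s\<^sup>2)"
        have q0: "0 \<le> q" "q \<le> 1" unfolding q_def by (auto simp: inverse_le_1_iff)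
        have "cmod (T (hh w) s) \<le> 6 * q" using h s Th_pointwise[OF w0 s] unfolding q_def by simp
        then have "(cmod (T (hh w) s))\<^sup>2 \<le> (6 * q)\<^sup>2" by (intro power_mono) auto
        also have "\<dots> = 36 * (q * q)" by (simp add: power2_eq_square)
        also have "\<dots> \<le> 36 * q" using q0 mult_left_mono[OF q0(2) q0(1)] by simp
        finally show "(cmod (T (hh w) s))\<^sup>2 \<le> 36 * inverse (1 + s\<^sup>2)" unfolding q_def .
      qed
    qed
    then show ?thesis unfolding L2norm_def by (rule real_sqrt_le_mono)
  qed
  have c: "w\<^sup>2 / (4 * pi) \<le> (L2norm (T (xx w)))\<^sup>2" unfolding n1 by (rule hh_L2norm_lower[OF w1])
  have d: "L2norm (xx w) \<le> 20 * (1 + w)" by (rule xx_L2norm[OF w0])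
  have e: "(L2norm (T (xx w)))\<^sup>2 \<le> K * L2norm (T (T (xx w))) * L2norm (xx w)" using K xL by blast
  have "K * L2norm (T (T (xx w))) * L2norm (xx w) \<le> \<bar>K\<bar> * L2norm (T (T (xx w))) * L2norm (xx w)"
    using L2norm_nonneg by (intro mult_right_mono) auto
  also have "\<dots> \<le> \<bar>K\<bar> * sqrt D0 * (20 * (1 + w))"
    using b d L2norm_nonneg n2 D00 by (intro mult_mono mult_left_mono) auto
  also have "\<dots> = 20 * M * (1 + w)" unfolding M_def by simp
  also have "\<dots> \<le> 20 * M * (2 * w)" using M0 w1 by (intro mult_left_mono) auto
  finally have f: "w\<^sup>2 / (4 * pi) \<le> 40 * M * w" using c e by simp
  then have "w * w \<le> (160 * pi * M) * w" using pi_gt3 by (simp add: field_simps power2_eq_square)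
  then have "w \<le> 160 * pi * M" using w1 by simp
  then show False unfolding w_def by simp
qed


end
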